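(* Under the standing assumptions below, suppose $\{\pi_i\}_{i\in\mathbb{N}_0}$ is a family of exceptional Gegenbauer polynomials with weight $W^{(\alpha)}_\tau$. Let $m\in\mathbb{N}_0$ and $t\in\mathbb{R}$ with $1+t\nu_m>0$, where $\nu_m=\int_{-1}^1\pi_m^2W^{(\alpha)}_\tau\,dz$. Then $\{\pi_{m;i}(\cdot,t)\}_{i\in\mathbb{N}_0}$ is a family of exceptional Gegenbauer polynomials with weight $W^{(\alpha)}_{\tau_m}$.
   Context: For a nonzero function $\tau$ and $\alpha\in\mathbb{R}$, $W^{(\alpha)}_\tau=(1-z^2)^{\alpha-1/2}\tau^{-2}$ and $T^{(\alpha)}_\tau=(1-z^2)\left(D_z^2-2\frac{\tau_z}{\tau}D_z+\frac{\tau_{zz}}{\tau}\right)-(2\alpha+1)zD_z+(2\alpha-1)z\frac{\tau_z}{\tau}$. $T^{(\alpha)}_\tau$ is an exceptional Gegenbauer operator if it has polynomial eigenfunctions $\{\pi_i\}_{i\in\mathbb{N}_0}$ of pairwise distinct degrees, with only finitely many nonnegative integers missing from $\{\deg\pi_i\}$. $\{\pi_i\}$ is a family of exceptional Gegenbauer polynomials with weight $W^{(\alpha)}_\tau$ if (a) $\tau$ has no zeros on $I=[-1,1]$; (b) the $\pi_i$ are the eigenpolynomials of an exceptional Gegenbauer operator $T^{(\alpha)}_\tau$; (c) $\{\pi_i\}$ is complete in $L^2(I,W^{(\alpha)}_\tau(z)dz)$. Standing assumptions: $\alpha\in\mathbb{N}_0+\frac12$; $\tau$ polynomial, $T^{(\alpha)}_\tau\pi_i=\lambda_i\pi_i$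 with the $\lambda_i$ pairwise distinct; $\rho_{ij}(z)=\int_{-1}^z\pi_i\pi_jW^{(\alpha)}_\tau\,du$; $\tau_m(z,t)=\tau(z)(1+t\rho_{mm}(z))$; $\pi_{m;i}(z,t)=(1+t\rho_{mm})\pi_i-t\rho_{im}\pi_m$; and it is assumed that all $\rho_{ij}$ are rational functions of $z$ and all $\tau_m,\pi_{m;i}$ are polynomials in $z$. *)

theory Defs
  imports "HOL-Analysis.Analysis" "HOL-Computational_Algebra.Polynomial"
begin

definition xW :: "real \<Rightarrow> real poly \<Rightarrow> real \<Rightarrow> real" where
  "xW \<alpha> \<tau> z = (1 - z\<^sup>2) powr (\<alpha> - 1/2) / (poly \<tau> z)\<^sup>2"

definition xT :: "real \<Rightarrow> real poly \<Rightarrow> real poly \<Rightarrow> real \<Rightarrow> real" where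
  "xT \<alpha> \<tau> p z =
     (1 - z\<^sup>2) * (poly (pderiv (pderiv p)) z
                   - 2 * (poly (pderiv \<tau>) z / poly \<tau> z) * poly (pderiv p) z
                   + (poly (pderiv (pderiv \<tau>)) z / poly \<tau> z) * poly p z)
     - (2 * \<alpha> + 1) * z * poly (pderiv p) z
     + (2 * \<alpha> - 1) * z * (poly (pderiv \<tau>) z / poly \<tau> z) * poly p z"

text \<open>p is an eigenpolynomial of T with eigenvalue lam (identity of rational functions,
  i.e. at every point where tau does not vanish).\<close>
definition xEigen :: "real \<Rightarrow> real poly \<Rightarrow> real poly \<Rightarrow> real \<Rightarrow> bool" where
  "xEigen \<alpha> \<tau> p lam \<longleftrightarrow> p \<noteq> 0 \<and> (\<forall>z. poly \<tau> z \<noteq> 0 \<longrightarrow> xT \<alpha> \<tau> p z = lam * poly p z)"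

definition xGegOperatorEigenfamily :: "real \<Rightarrow> real poly \<Rightarrow> (nat \<Rightarrow> real poly) \<Rightarrow> bool" where
  "xGegOperatorEigenfamily \<alpha> \<tau> \<pi> \<longleftrightarrow>
     (\<forall>i. \<exists>lam. xEigen \<alpha> \<tau> (\<pi> i) lam) \<and>
     inj (\<lambda>i. degree (\<pi> i)) \<and>
     finite (UNIV - range (\<lambda>i. degree (\<pi> i)))"

definition xL2 :: "(real \<Rightarrow> real) \<Rightarrow> (real \<Rightarrow> real) \<Rightarrow> bool" where
  "xL2 W f \<longleftrightarrow> f \<in> borel_measurable lborel \<and>
     (\<integral>\<^sup>+ z. indicator {-1..1} z * ennreal ((f z)\<^sup>2 * W z) \<partial>lborel) < \<infinity>"

definition xComplete :: "(real \<Rightarrow> real) \<Rightarrow> (nat \<Rightarrow> real poly) \<Rightarrow> bool" where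
  "xComplete W \<pi> \<longleftrightarrow>
     (\<forall>f. xL2 W f \<longrightarrow> (\<forall>\<epsilon>>0. \<exists>S c. finite S \<and>
        (\<integral>\<^sup>+ z. indicator {-1..1} z *
            ennreal ((f z - (\<Sum>i\<in>S. c i * poly (\<pi> i) z))\<^sup>2 * W z) \<partial>lborel) < ennreal \<epsilon>))"

definition xGegFamily :: "real \<Rightarrow> real poly \<Rightarrow> (nat \<Rightarrow> real poly) \<Rightarrow> bool" where
  "xGegFamily \<alpha> \<tau> \<pi> \<longleftrightarrow>
     (\<forall>z\<in>{-1..1}. poly \<tau> z \<noteq> 0) \<and>
     xGegOperatorEigenfamily \<alpha> \<tau> \<pi> \<and>
     xComplete (xW \<alpha> \<tau>) \<pi>"

definition xrho :: "real \<Rightarrow> real poly \<Rightarrow> (nat \<Rightarrow> real poly) \<Rightarrow> nat \<Rightarrow> nat \<Rightarrow> real \<Rightarrow> real" where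
  "xrho \<alpha> \<tau> \<pi> i j z =
     (LBINT u=ereal (-1)..ereal z. poly (\<pi> i) u * poly (\<pi> j) u * xW \<alpha> \<tau> u)"

definition xnu :: "real \<Rightarrow> real poly \<Rightarrow> (nat \<Rightarrow> real poly) \<Rightarrow> nat \<Rightarrow> real" where
  "xnu \<alpha> \<tau> \<pi> m = (LBINT u=ereal (-1)..ereal 1. (poly (\<pi> m) u)\<^sup>2 * xW \<alpha> \<tau> u)"

end

theory Submission
  imports Defs
begin


definition W0 :: "nat \<Rightarrow> real poly \<Rightarrow> real \<Rightarrow> real" where
  "W0 n \<tau> z = (1 - z\<^sup>2) ^ n / (poly \<tau> z)\<^sup>2"

lemma xW_eq_W0:
  assumes "\<alpha> = real n + 1/2" "\<bar>z\<bar> < 1"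
  shows "xW \<alpha> \<tau> z = W0 n \<tau> z"
proof -
  have "1 - z\<^sup>2 > 0" using assms(2) by (simp add: abs_square_less_1)
  then show ?thesis using assms(1) by (simp add: xW_def W0_def powr_realpow)
qed

lemma W0_cont: "\<forall>z\<in>S. poly \<tau> z \<noteq> 0 \<Longrightarrow> continuous_on S (W0 n \<tau>)"
  unfolding W0_def by (intro continuous_intros) auto

lemma W0_nonneg: "W0 n \<tau> z \<ge> 0 \<longleftrightarrow> True" if "\<bar>z\<bar> \<le> 1"
proof -
  have "1 - z\<^sup>2 \<ge> 0" using that by (simp add: abs_square_le_1)
  then show ?thesis by (simp add: W0_def)
qed

lemma lbint_to_integral:
  assumes "\<alpha> = real n + 1/2" "\<forall>z\<in>{-1..1}. poly \<tau> z \<noteq> 0" "z \<in> {-1..1}"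
    and cf: "continuous_on {-1..1} f"
  shows "(LBINT u=ereal (-1)..ereal z. f u * xW \<alpha> \<tau> u) = integral {-1..z} (\<lambda>u. f u * W0 n \<tau> u)"
proof -
  have "(LBINT u=ereal (-1)..ereal z. f u * xW \<alpha> \<tau> u) = (LBINT u=ereal (-1)..ereal z. f u * W0 n \<tau> u)"
  proof (rule interval_integral_cong)
    fix x assume "x \<in> einterval (min (ereal (-1)) (ereal z)) (max (ereal (-1)) (ereal z))"
    then have "\<bar>x\<bar> < 1" using assms(3) by (auto simp: einterval_def min_def max_def split: if_splits)
    then show "f x * xW \<alpha> \<tau> x = f x * W0 n \<tau> x" using xW_eq_W0[OF assms(1)] by simp
  qed
  also have "\<dots> = (LBINT u : {-1..z}. f u * W0 n \<tau> u)"
    using assms(3) by (intro interval_integral_Icc) auto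
  also have "\<dots> = integral {-1..z} (\<lambda>u. f u * W0 n \<tau> u)"
  proof (rule set_borel_integral_eq_integral)
    have "continuous_on {-1..z} (\<lambda>u. f u * W0 n \<tau> u)"
      using assms(2,3) by (intro continuous_intros continuous_on_subset[OF cf] W0_cont) auto
    then show "set_integrable lborel {-1..z} (\<lambda>u. f u * W0 n \<tau> u)"
      by (rule borel_integrable_atLeastAtMost')
  qed
  finally show ?thesis .
qed

lemma xrho_eq:
  assumes "\<alpha> = real n + 1/2" "\<forall>z\<in>{-1..1}. poly \<tau> z \<noteq> 0" "z \<in> {-1..1}"
  shows "xrho \<alpha> \<tau> \<pi> i j z = integral {-1..z} (\<lambda>u. poly (\<pi> i) u * poly (\<pi> j) u * W0 n \<tau> u)"
  unfolding xrho_def by (rule lbint_to_integral[OF assms]) (intro continuous_intros)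

lemma xnu_eq:
  assumes "\<alpha> = real n + 1/2" "\<forall>z\<in>{-1..1}. poly \<tau> z \<noteq> 0"
  shows "xnu \<alpha> \<tau> \<pi> m = integral {-1..1} (\<lambda>u. (poly (\<pi> m) u)\<^sup>2 * W0 n \<tau> u)"
  unfolding xnu_def by (rule lbint_to_integral[OF assms]) (auto simp: power2_eq_square intro!: continuous_intros)



lemma poly_pderiv_eq:
  fixes Q :: "real poly"
  assumes "open S" "z \<in> S" "\<And>x. x \<in> S \<Longrightarrow> poly Q x = f x" "(f has_real_derivative D) (at z)"
  shows "poly (pderiv Q) z = D"
proof -
  have "(f has_real_derivative poly (pderiv Q) z) (at z)"
    by (rule has_field_derivative_transform_within_open[OF poly_DERIV assms(1,2)]) (use assms(3) in auto)
  then show ?thesis using assms(4) DERIV_unique by blast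
qed

lemma cont_from_deriv:
  fixes f :: "real \<Rightarrow> real"
  assumes "\<And>x. x \<in> S \<Longrightarrow> \<exists>D. (f has_real_derivative D) (at x within S)"
  shows "continuous_on S f"
  unfolding continuous_on_eq_continuous_within
  using assms DERIV_continuous by blast

locale ctx =
  fixes \<alpha> :: real and \<tau> :: "real poly" and \<pi> :: "nat \<Rightarrow> real poly" and lam :: "nat \<Rightarrow> real"
    and n m :: nat and t :: real
  assumes alpha: "\<alpha> = real n + 1/2"
    and eig: "\<And>i. xEigen \<alpha> \<tau> (\<pi> i) (lam i)"
    and lam_inj: "inj lam"
    and tnz: "\<forall>z\<in>{-1..1}. poly \<tau> z \<noteq> 0"
    and pos: "1 + t * xnu \<alpha> \<tau> \<pi> m > 0"
begin

abbreviation "W \<equiv> W0 n \<tau>"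
definition "rho i j z = integral {-1..z} (\<lambda>u. poly (\<pi> i) u * poly (\<pi> j) u * W u)"
definition "h z = 1 + t * rho m m z"
definition "nu = rho m m 1"
definition "hc = min 1 (1 + t * nu)"
definition "hC = max 1 (1 + t * nu)"

lemma W_cont: "continuous_on {-1..1} W"
  using tnz by (intro W0_cont) auto

lemma W_nonneg: "z \<in> {-1..1} \<Longrightarrow> W z \<ge> 0"
  using W0_nonneg by auto

lemma xrho_rho: "z \<in> {-1..1} \<Longrightarrow> xrho \<alpha> \<tau> \<pi> i j z = rho i j z"
  unfolding rho_def using xrho_eq[OF alpha tnz] by blast

lemma xnu_nu: "xnu \<alpha> \<tau> \<pi> m = nu"
  unfolding nu_def rho_def xnu_eq[OF alpha tnz] by (simp add: power2_eq_square)

lemma integrand_cont: "continuous_on {-1..1} (\<lambda>u. poly (\<pi> i) u * poly (\<pi> j) u * W u)"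
  using W_cont by (intro continuous_intros) auto

lemma rho_deriv_within:
  "x \<in> {-1..1} \<Longrightarrow> (rho i j has_real_derivative poly (\<pi> i) x * poly (\<pi> j) x * W x) (at x within {-1..1})"
  unfolding rho_def by (rule integral_has_real_derivative[OF integrand_cont])

lemma rho_deriv:
  assumes "z \<in> {-1<..<1}"
  shows "(rho i j has_real_derivative poly (\<pi> i) z * poly (\<pi> j) z * W z) (at z)"
proof -
  have "at z within {-1..1} = at z" using assms by (intro at_within_interior) auto
  then show ?thesis using rho_deriv_within[of z i j] assms by auto
qed

lemma rho_cont: "continuous_on {-1..1} (rho i j)"
  by (rule cont_from_deriv) (use rho_deriv_within in blast)

lemma rho_m1 [simp]: "rho i j (-1) = 0"
  unfolding rho_def by simp

lemma rho_mm_bounds: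
  assumes "z \<in> {-1..1}"
  shows "0 \<le> rho m m z" "rho m m z \<le> nu"
proof -
  let ?f = "\<lambda>u. poly (\<pi> m) u * poly (\<pi> m) u * W u"
  have nn: "\<forall>x\<in>{-1..1}. 0 \<le> ?f x" using W_nonneg by (auto intro: mult_nonneg_nonneg)
  have i1: "?f integrable_on {-1..1}" by (rule integrable_continuous_interval[OF integrand_cont])
  have i2: "?f integrable_on {-1..z}"
    by (rule integrable_on_subinterval[OF i1]) (use assms in auto)
  show "0 \<le> rho m m z" unfolding rho_def by (rule integral_nonneg[OF i2]) (use nn assms in auto)
  show "rho m m z \<le> nu" unfolding rho_def nu_def
    by (rule integral_subset_le[OF _ i2 i1 nn]) (use assms in auto)
qed

lemma hc_pos: "hc > 0"
  using pos xnu_nu by (simp add: hc_def)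

lemma h_bounds:
  assumes "z \<in> {-1..1}"
  shows "hc \<le> h z" "h z \<le> hC"
proof -
  have a: "0 \<le> rho m m z" "rho m m z \<le> nu" using rho_mm_bounds[OF assms] by auto
  show "hc \<le> h z"
  proof (cases "t \<ge> 0")
    case True then show ?thesis using a by (simp add: hc_def h_def)
  next
    case False
    then have "t * nu \<le> t * rho m m z" using a by (intro mult_left_mono_neg) auto
    then show ?thesis by (simp add: hc_def h_def)
  qed
  show "h z \<le> hC"
  proof (cases "t \<ge> 0")
    case True
    then have "t * rho m m z \<le> t * nu" using a by (intro mult_left_mono) auto
    then show ?thesis by (simp add: hC_def h_def)
  next
    case False
    then have "t * rho m m z \<le> 0" using a by (simp add: mult_nonpos_nonneg)
    then show ?thesis by (simp add: hC_def h_def)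
  qed
qed

lemma h_pos: "z \<in> {-1..1} \<Longrightarrow> h z > 0"
  using h_bounds(1) hc_pos by fastforce

lemma W_deriv:
  assumes "z \<in> {-1<..<1}"
  shows "(W has_real_derivative W z * (- (2 * real n * z) / (1 - z\<^sup>2) - 2 * poly (pderiv \<tau>) z / poly \<tau> z)) (at z)"
proof -
  have z1: "1 - z\<^sup>2 > 0" using assms by (simp add: abs_square_less_1 abs_less_iff)
  have tz: "poly \<tau> z \<noteq> 0" using tnz assms by auto
  have d: "(W has_real_derivative
      ((real n * (1 - z\<^sup>2) ^ (n - 1) * (- (2 * z))) * (poly \<tau> z)\<^sup>2
       - (1 - z\<^sup>2) ^ n * (2 * poly \<tau> z * poly (pderiv \<tau>) z)) / ((poly \<tau> z)\<^sup>2)\<^sup>2) (at z)"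
    unfolding W0_def[abs_def]
    by (auto intro!: derivative_eq_intros simp: tz)
  have e: "real n * (1 - z\<^sup>2) ^ (n - 1) = real n * (1 - z\<^sup>2) ^ n / (1 - z\<^sup>2)"
    using z1 by (cases n) auto
  show ?thesis
  proof (rule DERIV_cong[OF d])
    show "((real n * (1 - z\<^sup>2) ^ (n - 1) * (- (2 * z))) * (poly \<tau> z)\<^sup>2
       - (1 - z\<^sup>2) ^ n * (2 * poly \<tau> z * poly (pderiv \<tau>) z)) / ((poly \<tau> z)\<^sup>2)\<^sup>2
      = W z * (- (2 * real n * z) / (1 - z\<^sup>2) - 2 * poly (pderiv \<tau>) z / poly \<tau> z)"
      unfolding e W0_def using z1 tz by (simp add: field_simps power2_eq_square)
  qed
qed

end


definition Rp :: "real \<Rightarrow> real poly \<Rightarrow> real poly \<Rightarrow> real \<Rightarrow> real poly" where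
  "Rp a \<tau> p l = [:1,0,-1:] * (\<tau> * pderiv (pderiv p) - smult 2 (pderiv \<tau> * pderiv p) + pderiv (pderiv \<tau>) * p)
     - smult (2*a+1) ([:0,1:] * \<tau> * pderiv p) + smult (2*a-1) ([:0,1:] * pderiv \<tau> * p) - smult l (\<tau> * p)"

lemma poly_Rp: "poly (Rp a \<tau> p l) z =
   (1 - z\<^sup>2) * (poly \<tau> z * poly (pderiv (pderiv p)) z - 2 * poly (pderiv \<tau>) z * poly (pderiv p) z
      + poly (pderiv (pderiv \<tau>)) z * poly p z)
   - (2*a+1) * z * poly \<tau> z * poly (pderiv p) z + (2*a-1) * z * poly (pderiv \<tau>) z * poly p z
   - l * poly \<tau> z * poly p z"
  by (simp add: Rp_def algebra_simps power2_eq_square)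

lemma xT_Rp:
  assumes "poly \<tau> z \<noteq> 0"
  shows "xT a \<tau> p z = l * poly p z \<longleftrightarrow> poly (Rp a \<tau> p l) z = 0"
proof -
  have "poly (Rp a \<tau> p l) z = poly \<tau> z * (xT a \<tau> p z - l * poly p z)"
    unfolding poly_Rp xT_def using assms by (simp add: field_simps)
  then show ?thesis using assms by simp
qed

lemma poly_zero_infinite:
  fixes Q :: "real poly"
  assumes "infinite S" "\<And>z. z \<in> S \<Longrightarrow> poly Q z = 0"
  shows "Q = 0"
proof (rule ccontr)
  assume "Q \<noteq> 0"
  then have "finite {x. poly Q x = 0}" by (rule poly_roots_finite)
  moreover have "S \<subseteq> {x. poly Q x = 0}" using assms(2) by auto
  ultimately have "finite S" by (rule finite_subset[rotated])
  then show False using assms(1) by simp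
qed

lemma poly_zero_Ioo:
  fixes Q :: "real poly"
  assumes "\<And>z. z \<in> {-1<..<1} \<Longrightarrow> poly Q z = 0"
  shows "Q = 0"
  by (rule poly_zero_infinite[of "{-1<..<1}"]) (simp_all add: infinite_Ioo assms)

lemma xEigen_iff:
  assumes "\<tau> \<noteq> 0"
  shows "xEigen a \<tau> p l \<longleftrightarrow> p \<noteq> 0 \<and> Rp a \<tau> p l = 0"
proof
  assume e: "xEigen a \<tau> p l"
  have "Rp a \<tau> p l = 0"
  proof (rule poly_zero_infinite)
    have "finite {x. poly \<tau> x = 0}" by (rule poly_roots_finite[OF assms])
    moreover have "{x. poly \<tau> x \<noteq> 0} = - {x. poly \<tau> x = 0}" by auto
    ultimately show "infinite {x. poly \<tau> x \<noteq> 0}"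
      using infinite_UNIV_char_0[where 'a=real] finite_compl by metis
    show "poly (Rp a \<tau> p l) z = 0" if "z \<in> {x. poly \<tau> x \<noteq> 0}" for z
      using e that xT_Rp unfolding xEigen_def by auto
  qed
  then show "p \<noteq> 0 \<and> Rp a \<tau> p l = 0" using e unfolding xEigen_def by auto
next
  assume "p \<noteq> 0 \<and> Rp a \<tau> p l = 0"
  then show "xEigen a \<tau> p l" unfolding xEigen_def using xT_Rp by auto
qed

lemma coeff_mult_bound:
  fixes p q :: "'a::comm_semiring_1 poly"
  assumes "degree p \<le> a" "degree q \<le> b"
  shows "coeff (p * q) (a + b) = coeff p a * coeff q b"
proof -
  have "coeff (p * q) (a + b) = (\<Sum>i\<le>a+b. coeff p i * coeff q (a + b - i))" by (rule coeff_mult)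
  also have "\<dots> = (\<Sum>i\<in>{a}. coeff p i * coeff q (a + b - i))"
  proof (rule sum.mono_neutral_right)
    show "\<forall>i\<in>{..a + b} - {a}. coeff p i * coeff q (a + b - i) = 0"
    proof
      fix i assume "i \<in> {..a + b} - {a}"
      then have "i < a \<or> i > a" by auto
      then show "coeff p i * coeff q (a + b - i) = 0"
      proof
        assume "i < a" then have "a + b - i > degree q" using assms by auto
        then show ?thesis by (simp add: coeff_eq_0)
      next
        assume "i > a" then have "i > degree p" using assms by auto
        then show ?thesis by (simp add: coeff_eq_0)
      qed
    qed
  qed auto
  finally show ?thesis by simp
qed

lemma xpd:
  fixes q :: "real poly"
  assumes "degree q \<le> k"
  shows "degree ([:0,1:] * pderiv q) \<le> k" "coeff ([:0,1:] * pderiv q) k = real k * coeff q k"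
proof -
  have e: "[:0,1:] * pderiv q = pCons 0 (pderiv q)" by (simp add: pCons_eq_iff)
  show "degree ([:0,1:] * pderiv q) \<le> k"
  proof (cases "degree q = 0")
    case True then have "pderiv q = 0" by (simp add: pderiv_eq_0_iff)
    then show ?thesis by simp
  next
    case False
    then have "degree (pCons 0 (pderiv q)) \<le> Suc (degree q - 1)"
      using degree_pCons_le[of 0 "pderiv q"] by (simp add: degree_pderiv)
    then show ?thesis using e False assms by simp
  qed
  show "coeff ([:0,1:] * pderiv q) k = real k * coeff q k"
    unfolding e by (cases k) (auto simp: coeff_pderiv)
qed

lemma xxpdd:
  fixes q :: "real poly"
  assumes "degree q \<le> k"
  shows "degree ([:0,1:] * ([:0,1:] * pderiv (pderiv q))) \<le> k"
    "coeff ([:0,1:] * ([:0,1:] * pderiv (pderiv q))) k = real k * (real k - 1) * coeff q k"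
proof -
  have e: "[:0,1:] * ([:0,1:] * pderiv (pderiv q)) = pCons 0 (pCons 0 (pderiv (pderiv q)))"
    by (simp add: pCons_eq_iff)
  show "degree ([:0,1:] * ([:0,1:] * pderiv (pderiv q))) \<le> k"
  proof (cases "degree q \<le> 1")
    case True then have "pderiv (pderiv q) = 0" by (simp add: pderiv_eq_0_iff degree_pderiv)
    then show ?thesis by simp
  next
    case False
    have "degree (pCons 0 (pCons 0 (pderiv (pderiv q)))) \<le> Suc (Suc (degree q - 1 - 1))"
      using degree_pCons_le[of 0 "pderiv (pderiv q)"] degree_pCons_le[of 0 "pCons 0 (pderiv (pderiv q))"]
      by (simp add: degree_pderiv)
    then show ?thesis using e False assms by simp
  qed
  show "coeff ([:0,1:] * ([:0,1:] * pderiv (pderiv q))) k = real k * (real k - 1) * coeff q k"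
    unfolding e
  proof (cases k)
    case 0 then show "coeff (pCons 0 (pCons 0 (pderiv (pderiv q)))) k = real k * (real k - 1) * coeff q k" by simp
  next
    case (Suc k1) then show "coeff (pCons 0 (pCons 0 (pderiv (pderiv q)))) k = real k * (real k - 1) * coeff q k"
      by (cases k1) (auto simp: coeff_pderiv algebra_simps)
  qed
qed

lemma coeff_x2: "coeff ([:0,1:] * ([:0,1:] * (G::real poly))) (j + 2) = coeff G j"
proof -
  have "[:0,1:] * ([:0,1:] * G) = pCons 0 (pCons 0 G)" by (simp add: pCons_eq_iff)
  then show ?thesis by (simp add: numeral_2_eq_2)
qed

lemma Rp_degree:
  fixes \<tau> p :: "real poly"
  assumes "p \<noteq> 0" "\<tau> \<noteq> 0" "Rp a \<tau> p l = 0"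
  shows "l = - (real (degree p) - real (degree \<tau>)) * (real (degree p) - real (degree \<tau>) + 2 * a)"
proof -
  define k where "k = degree p"
  define d where "d = degree \<tau>"
  define N where "N = d + k"
  let ?x = "[:0,1:] :: real poly"
  define Y where "Y = \<tau> * (?x * (?x * pderiv (pderiv p))) - smult 2 ((?x * pderiv \<tau>) * (?x * pderiv p))
     + (?x * (?x * pderiv (pderiv \<tau>))) * p"
  have id: "?x * (?x * Rp a \<tau> p l) = Y - ?x * (?x * Y)
       - smult (2*a+1) (?x * (?x * (\<tau> * (?x * pderiv p))))
       + smult (2*a-1) (?x * (?x * ((?x * pderiv \<tau>) * p)))
       - smult l (?x * (?x * (\<tau> * p)))"
    by (rule poly_ext) (simp add: Rp_def Y_def, algebra)
  have dp: "degree p \<le> k" and dt: "degree \<tau> \<le> d" by (auto simp: k_def d_def)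
  note x1 = xxpdd[OF dp] and x2 = xxpdd[OF dt] and x3 = xpd[OF dp] and x4 = xpd[OF dt]
  have dY: "degree Y \<le> N"
  proof -
    have "degree (\<tau> * (?x * (?x * pderiv (pderiv p)))) \<le> N"
      using degree_mult_le[of \<tau>] dt x1(1) unfolding N_def by (meson add_mono order_trans)
    moreover have "degree ((?x * pderiv \<tau>) * (?x * pderiv p)) \<le> N"
      using degree_mult_le[of "?x * pderiv \<tau>"] x4(1) x3(1) unfolding N_def by (meson add_mono order_trans)
    moreover have "degree ((?x * (?x * pderiv (pderiv \<tau>))) * p) \<le> N"
      using degree_mult_le[of "?x * (?x * pderiv (pderiv \<tau>))"] x2(1) dp unfolding N_def by (meson add_mono order_trans)
    ultimately show ?thesis unfolding Y_def
      by (intro degree_add_le degree_diff_le) (auto intro: order_trans[OF degree_smult_le])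
  qed
  have y1: "coeff (\<tau> * (?x * (?x * pderiv (pderiv p)))) N = coeff \<tau> d * (real k * (real k - 1) * coeff p k)"
    unfolding N_def coeff_mult_bound[OF dt x1(1)] x1(2) ..
  have y2: "coeff ((?x * pderiv \<tau>) * (?x * pderiv p)) N = (real d * coeff \<tau> d) * (real k * coeff p k)"
    unfolding N_def coeff_mult_bound[OF x4(1) x3(1)] x3(2) x4(2) ..
  have y3: "coeff ((?x * (?x * pderiv (pderiv \<tau>))) * p) N = (real d * (real d - 1) * coeff \<tau> d) * coeff p k"
    unfolding N_def coeff_mult_bound[OF x2(1) dp] x2(2) ..
  have cY: "coeff Y N = coeff \<tau> d * coeff p k * (real k * (real k - 1) - 2 * real d * real k + real d * (real d - 1))"
    unfolding Y_def coeff_add coeff_diff coeff_smult y1 y2 y3 by (simp add: algebra_simps)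
  have c1: "coeff (\<tau> * (?x * pderiv p)) N = coeff \<tau> d * (real k * coeff p k)"
    unfolding N_def coeff_mult_bound[OF dt x3(1)] x3(2) ..
  have c2: "coeff ((?x * pderiv \<tau>) * p) N = real d * coeff \<tau> d * coeff p k"
    unfolding N_def coeff_mult_bound[OF x4(1) dp] x4(2) ..
  have c3: "coeff (\<tau> * p) N = coeff \<tau> d * coeff p k"
    unfolding N_def by (simp add: coeff_mult_degree_sum k_def d_def)
  have "coeff (?x * (?x * Rp a \<tau> p l)) (N + 2) = 0" using assms(3) by simp
  also have "coeff (?x * (?x * Rp a \<tau> p l)) (N + 2) =
      coeff Y (N+2) - coeff Y N - (2*a+1) * coeff (\<tau> * (?x * pderiv p)) N
      + (2*a-1) * coeff ((?x * pderiv \<tau>) * p) N - l * coeff (\<tau> * p) N"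
    unfolding id by (simp only: coeff_diff coeff_add coeff_smult coeff_x2)
  also have "coeff Y (N+2) = 0" using dY by (simp add: coeff_eq_0)
  finally have e: "0 = - coeff \<tau> d * coeff p k * (real k * (real k - 1) - 2 * real d * real k + real d * (real d - 1)
       + (2*a+1) * real k - (2*a-1) * real d + l)"
    unfolding cY c1 c2 c3 by (simp add: algebra_simps)
  have "coeff \<tau> d \<noteq> 0" "coeff p k \<noteq> 0" using assms by (auto simp: d_def k_def)
  then have "real k * (real k - 1) - 2 * real d * real k + real d * (real d - 1)
       + (2*a+1) * real k - (2*a-1) * real d + l = 0" using e by simp
  then show ?thesis unfolding k_def[symmetric] d_def[symmetric] by (simp add: algebra_simps)
qed



lemma alg_wr:
  fixes z T T1 T2 p p1 p2 q q1 q2 W W1 lam mu a :: real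
  assumes Ep: "(1-z^2)*(T*p2 - 2*T1*p1 + T2*p) - (2*a+1)*z*T*p1 + (2*a-1)*z*T1*p - lam*T*p = 0"
  assumes Eq: "(1-z^2)*(T*q2 - 2*T1*q1 + T2*q) - (2*a+1)*z*T*q1 + (2*a-1)*z*T1*q - mu*T*q = 0"
  assumes Wd: "(1-z^2)*T*W1 = W*(-(2*a-1)*z*T - 2*(1-z^2)*T1)"
  assumes ne: "T \<noteq> 0"
  shows "-2*z*W*(p1*q - p*q1) + (1-z^2)*W1*(p1*q-p*q1) + (1-z^2)*W*(p2*q - p*q2) = (lam-mu)*p*q*W"
  using assms by algebra

lemma alg_main:
  fixes z T T1 T2 p p1 p2 q q1 q2 W W1 h h1 h2 t lam mu a r TM TM1 TM2 PP PP1 PP2 :: real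
  assumes Ep: "(1-z^2)*(T*p2 - 2*T1*p1 + T2*p) - (2*a+1)*z*T*p1 + (2*a-1)*z*T1*p - lam*T*p = 0"
  assumes Eq: "(1-z^2)*(T*q2 - 2*T1*q1 + T2*q) - (2*a+1)*z*T*q1 + (2*a-1)*z*T1*q - mu*T*q = 0"
  assumes Wd: "(1-z^2)*T*W1 = W*(-(2*a-1)*z*T - 2*(1-z^2)*T1)"
  assumes r: "(lam-mu)*r = (1-z^2)*W*(p1*q - p*q1)"
  assumes ne: "lam \<noteq> mu" "T \<noteq> 0" "1-z^2 \<noteq> 0"
  assumes h1: "h1 = t*(q*q*W)" and h2: "h2 = t*(2*q*q1*W + q*q*W1)"
  assumes TM: "TM = T*h" "TM1 = T1*h + T*h1" "TM2 = T2*h + 2*T1*h1 + T*h2"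
  assumes PP: "PP = h*p - t*r*q" "PP1 = h1*p + h*p1 - t*(p*q*W)*q - t*r*q1"
     "PP2 = h2*p + 2*h1*p1 + h*p2 - t*((p1*q+p*q1)*W + p*q*W1)*q - 2*t*(p*q*W)*q1 - t*r*q2"
  shows "(1-z^2)*(TM*PP2 - 2*TM1*PP1 + TM2*PP) - (2*a+1)*z*TM*PP1 + (2*a-1)*z*TM1*PP - lam*TM*PP = 0"
  unfolding TM PP h1 h2 using Ep Eq Wd r ne by algebra

lemma alg_m:
  fixes z T T1 T2 q q1 q2 W W1 h h1 h2 t mu a TM TM1 TM2 :: real
  assumes Eq: "(1-z^2)*(T*q2 - 2*T1*q1 + T2*q) - (2*a+1)*z*T*q1 + (2*a-1)*z*T1*q - mu*T*q = 0"
  assumes Wd: "(1-z^2)*T*W1 = W*(-(2*a-1)*z*T - 2*(1-z^2)*T1)"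
  assumes h1: "h1 = t*(q*q*W)" and h2: "h2 = t*(2*q*q1*W + q*q*W1)"
  assumes TM: "TM = T*h" "TM1 = T1*h + T*h1" "TM2 = T2*h + 2*T1*h1 + T*h2"
  shows "(1-z^2)*(TM*q2 - 2*TM1*q1 + TM2*q) - (2*a+1)*z*TM*q1 + (2*a-1)*z*TM1*q - mu*TM*q = 0"
  unfolding TM h1 h2 using Eq Wd by algebra



lemma DM:
  "(f has_real_derivative Da) (at x) \<Longrightarrow> (g has_real_derivative Db) (at x) \<Longrightarrow>
    ((\<lambda>x. f x * g x) has_real_derivative Da * g x + f x * Db) (at x)"
  using DERIV_mult[of f Da x UNIV g Db] by (simp add: mult.commute)

context ctx begin

definition "T z = poly \<tau> z"
definition "T1 z = poly (pderiv \<tau>) z"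
definition "T2 z = poly (pderiv (pderiv \<tau>)) z"
definition "pp i z = poly (\<pi> i) z"
definition "pp1 i z = poly (pderiv (\<pi> i)) z"
definition "pp2 i z = poly (pderiv (pderiv (\<pi> i))) z"
definition "W1 z = W z * (- (2 * real n * z) / (1 - z\<^sup>2) - 2 * T1 z / T z)"
definition "h1 z = t * (pp m z * pp m z * W z)"
definition "h2 z = t * (2 * pp m z * pp1 m z * W z + pp m z * pp m z * W1 z)"

lemma tau_ne0: "\<tau> \<noteq> 0"
  using tnz by (metis atLeastAtMost_iff neg_le_0_iff_le poly_0 zero_less_one_class.zero_le_one)

lemma pi_Rp: "\<pi> i \<noteq> 0" "Rp \<alpha> \<tau> (\<pi> i) (lam i) = 0"
  using eig[of i] xEigen_iff[OF tau_ne0] by auto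

lemma Ept: "(1-z^2)*(T z*pp2 i z - 2*T1 z*pp1 i z + T2 z*pp i z) - (2*\<alpha>+1)*z*T z*pp1 i z
   + (2*\<alpha>-1)*z*T1 z*pp i z - lam i*T z*pp i z = 0"
  using arg_cong[OF pi_Rp(2)[of i], of "\<lambda>Q. poly Q z"] unfolding poly_Rp
  by (simp add: T_def T1_def T2_def pp_def pp1_def pp2_def algebra_simps)

lemma Ioo_facts:
  assumes "z \<in> {-1<..<1}"
  shows "1 - z\<^sup>2 > 0" "T z \<noteq> 0" "z \<in> {-1..1}"
  using assms tnz by (auto simp: abs_square_less_1 abs_less_iff T_def)

lemma Wd: "z \<in> {-1<..<1} \<Longrightarrow> (1-z^2)*T z*W1 z = W z*(-(2*\<alpha>-1)*z*T z - 2*(1-z^2)*T1 z)"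
  using Ioo_facts[of z] unfolding W1_def alpha by (simp add: field_simps)

lemma W_deriv': "z \<in> {-1<..<1} \<Longrightarrow> (W has_real_derivative W1 z) (at z)"
  using W_deriv unfolding W1_def T_def T1_def by blast

lemma pp_deriv: "(pp i has_real_derivative pp1 i z) (at z)"
  unfolding pp_def pp1_def by (rule poly_DERIV)
lemma pp1_deriv: "(pp1 i has_real_derivative pp2 i z) (at z)"
  unfolding pp1_def pp2_def by (rule poly_DERIV)
lemma T_deriv: "(T has_real_derivative T1 z) (at z)"
  unfolding T_def T1_def by (rule poly_DERIV)
lemma T1_deriv: "(T1 has_real_derivative T2 z) (at z)"
  unfolding T1_def T2_def by (rule poly_DERIV)

lemma h_deriv: "z \<in> {-1<..<1} \<Longrightarrow> (h has_real_derivative h1 z) (at z)"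
  unfolding h_def[abs_def] h1_def pp_def
  by (auto intro!: derivative_eq_intros rho_deriv)

lemma prodW_deriv:
  assumes "z \<in> {-1<..<1}"
  shows "((\<lambda>z. pp i z * pp j z * W z) has_real_derivative
     (pp1 i z * pp j z + pp i z * pp1 j z) * W z + pp i z * pp j z * W1 z) (at z)"
proof -
  have "((\<lambda>z. pp i z * pp j z * W z) has_real_derivative
     (pp1 i z * pp j z + pp i z * pp1 j z) * W z + (pp i z * pp j z) * W1 z) (at z)"
    by (intro DM pp_deriv W_deriv'[OF assms])
  then show ?thesis by simp
qed

lemma h1_deriv: "z \<in> {-1<..<1} \<Longrightarrow> (h1 has_real_derivative h2 z) (at z)"
proof -
  assume z: "z \<in> {-1<..<1}"
  have "((\<lambda>z. t * (pp m z * pp m z * W z)) has_real_derivative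
      t * ((pp1 m z * pp m z + pp m z * pp1 m z) * W z + pp m z * pp m z * W1 z)) (at z)"
    by (intro DERIV_cmult prodW_deriv z)
  then show ?thesis unfolding h1_def[abs_def] h2_def by (simp add: algebra_simps)
qed

lemma wronskian:
  assumes "i \<noteq> m" "z \<in> {-1..1}"
  shows "(lam i - lam m) * rho i m z = (1-z^2)*W z*(pp1 i z * pp m z - pp i z * pp1 m z)"
proof -
  have ne: "lam i \<noteq> lam m" using lam_inj assms(1) by (meson injD)
  define Psi where "Psi z = (1-z^2)*W z*(pp1 i z * pp m z - pp i z * pp1 m z)" for z
  define f where "f z = (lam i - lam m) * rho i m z - Psi z" for z
  have cf: "continuous_on {-1..1} f"
    unfolding f_def[abs_def] Psi_def[abs_def] pp_def pp1_def
    using rho_cont W_cont by (intro continuous_intros) auto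
  have df: "(f has_real_derivative 0) (at x)" if x: "-1 < x" "x < 1" for x
  proof -
    have xI: "x \<in> {-1<..<1}" using x by auto
    have d1: "((\<lambda>z. 1 - z^2) has_real_derivative - 2 * x) (at x)"
      by (auto intro!: derivative_eq_intros)
    have d3: "((\<lambda>z. pp1 i z * pp m z - pp i z * pp1 m z) has_real_derivative
        (pp2 i x * pp m x + pp1 i x * pp1 m x) - (pp1 i x * pp1 m x + pp i x * pp2 m x)) (at x)"
      by (intro DERIV_diff DM pp_deriv pp1_deriv)
    have dPsi: "(Psi has_real_derivative
        ((- 2 * x) * W x + (1 - x^2) * W1 x) * (pp1 i x * pp m x - pp i x * pp1 m x)
        + (1 - x^2) * W x * ((pp2 i x * pp m x + pp1 i x * pp1 m x) - (pp1 i x * pp1 m x + pp i x * pp2 m x))) (at x)"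
      unfolding Psi_def[abs_def] by (intro DM d1 d3 W_deriv'[OF xI])
    have alg: "((- 2 * x) * W x + (1 - x^2) * W1 x) * (pp1 i x * pp m x - pp i x * pp1 m x)
        + (1 - x^2) * W x * ((pp2 i x * pp m x + pp1 i x * pp1 m x) - (pp1 i x * pp1 m x + pp i x * pp2 m x))
        = (lam i - lam m) * (pp i x * pp m x * W x)"
      using alg_wr[OF Ept[of x i] Ept[of x m] Wd[OF xI] Ioo_facts(2)[OF xI]] by (simp add: algebra_simps)
    have "(f has_real_derivative (lam i - lam m) * (pp i x * pp m x * W x) - (lam i - lam m) * (pp i x * pp m x * W x)) (at x)"
      unfolding f_def[abs_def]
      by (intro DERIV_diff DERIV_cmult) (use rho_deriv[OF xI, of i m] dPsi alg in \<open>auto simp: pp_def\<close>)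
    then show ?thesis by simp
  qed
  have "f z = f (-1)" by (rule DERIV_isconst2[of "-1" 1 f z]) (use cf df assms(2) in auto)
  also have "f (-1) = 0" by (simp add: f_def Psi_def)
  finally show ?thesis by (simp add: f_def Psi_def)
qed

end


locale ctx2 = ctx +
  fixes \<tau>m :: "real poly" and P :: "nat \<Rightarrow> real poly"
  assumes tm: "\<And>z. z \<in> {-1..1} \<Longrightarrow> poly \<tau>m z = poly \<tau> z * h z"
    and Pd: "\<And>i z. z \<in> {-1..1} \<Longrightarrow> poly (P i) z = h z * poly (\<pi> i) z - t * rho i m z * poly (\<pi> m) z"
begin

lemma tm_nz: "z \<in> {-1..1} \<Longrightarrow> poly \<tau>m z \<noteq> 0"
  using tm h_pos tnz by fastforce

lemma tm_ne0: "\<tau>m \<noteq> 0"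
  using tm_nz[of 0] by auto

lemma open_Ioo': "open {-1<..<(1::real)}" by simp

lemma tm1: "z \<in> {-1<..<1} \<Longrightarrow> poly (pderiv \<tau>m) z = T1 z * h z + T z * h1 z"
proof -
  assume z: "z \<in> {-1<..<1}"
  show ?thesis
  proof (rule poly_pderiv_eq[OF open_Ioo' z])
    show "poly \<tau>m x = T x * h x" if "x \<in> {-1<..<1}" for x using tm[of x] that by (auto simp: T_def)
    show "((\<lambda>x. T x * h x) has_real_derivative T1 z * h z + T z * h1 z) (at z)"
      by (intro DM T_deriv h_deriv z)
  qed
qed

lemma tm2: "z \<in> {-1<..<1} \<Longrightarrow> poly (pderiv (pderiv \<tau>m)) z = T2 z * h z + 2 * T1 z * h1 z + T z * h2 z"
proof -
  assume z: "z \<in> {-1<..<1}"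
  have "poly (pderiv (pderiv \<tau>m)) z = (T2 z * h z + T1 z * h1 z) + (T1 z * h1 z + T z * h2 z)"
  proof (rule poly_pderiv_eq[OF open_Ioo' z])
    show "poly (pderiv \<tau>m) x = T1 x * h x + T x * h1 x" if "x \<in> {-1<..<1}" for x using tm1 that by auto
    show "((\<lambda>x. T1 x * h x + T x * h1 x) has_real_derivative (T2 z * h z + T1 z * h1 z) + (T1 z * h1 z + T z * h2 z)) (at z)"
      by (intro DERIV_add DM T_deriv T1_deriv h_deriv h1_deriv z)
  qed
  then show ?thesis by simp
qed

lemma rho_deriv': "z \<in> {-1<..<1} \<Longrightarrow> (rho i m has_real_derivative pp i z * pp m z * W z) (at z)"
  using rho_deriv unfolding pp_def by blast

lemma P1: "z \<in> {-1<..<1} \<Longrightarrow> poly (pderiv (P i)) z =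
   h1 z * pp i z + h z * pp1 i z - t * (pp i z * pp m z * W z) * pp m z - t * rho i m z * pp1 m z"
proof -
  assume z: "z \<in> {-1<..<1}"
  have "poly (pderiv (P i)) z = (h1 z * pp i z + h z * pp1 i z) - (t * (pp i z * pp m z * W z) * pp m z + t * rho i m z * pp1 m z)"
  proof (rule poly_pderiv_eq[OF open_Ioo' z])
    show "poly (P i) x = h x * pp i x - (t * rho i m x) * pp m x" if "x \<in> {-1<..<1}" for x
      using Pd[of x i] that by (auto simp: pp_def)
    show "((\<lambda>x. h x * pp i x - (t * rho i m x) * pp m x) has_real_derivative
       (h1 z * pp i z + h z * pp1 i z) - (t * (pp i z * pp m z * W z) * pp m z + t * rho i m z * pp1 m z)) (at z)"
      by (intro DERIV_diff DM DERIV_cmult h_deriv pp_deriv rho_deriv' z)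
  qed
  then show ?thesis by simp
qed

lemma P2: "z \<in> {-1<..<1} \<Longrightarrow> poly (pderiv (pderiv (P i))) z =
   h2 z * pp i z + 2 * h1 z * pp1 i z + h z * pp2 i z
   - t * ((pp1 i z * pp m z + pp i z * pp1 m z) * W z + pp i z * pp m z * W1 z) * pp m z
   - 2 * t * (pp i z * pp m z * W z) * pp1 m z - t * rho i m z * pp2 m z"
proof -
  assume z: "z \<in> {-1<..<1}"
  have "poly (pderiv (pderiv (P i))) z =
     ((h2 z * pp i z + h1 z * pp1 i z) + (h1 z * pp1 i z + h z * pp2 i z))
     - ((t * ((pp1 i z * pp m z + pp i z * pp1 m z) * W z + pp i z * pp m z * W1 z) * pp m z + t * (pp i z * pp m z * W z) * pp1 m z)
     + (t * (pp i z * pp m z * W z) * pp1 m z + t * rho i m z * pp2 m z))"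
  proof (rule poly_pderiv_eq[OF open_Ioo' z])
    show "poly (pderiv (P i)) x = (h1 x * pp i x + h x * pp1 i x) - ((t * (pp i x * pp m x * W x)) * pp m x + (t * rho i m x) * pp1 m x)"
      if "x \<in> {-1<..<1}" for x
      using P1[OF that, of i] by simp
    show "((\<lambda>x. (h1 x * pp i x + h x * pp1 i x) - ((t * (pp i x * pp m x * W x)) * pp m x + (t * rho i m x) * pp1 m x))
      has_real_derivative
     ((h2 z * pp i z + h1 z * pp1 i z) + (h1 z * pp1 i z + h z * pp2 i z))
     - ((t * ((pp1 i z * pp m z + pp i z * pp1 m z) * W z + pp i z * pp m z * W1 z) * pp m z + t * (pp i z * pp m z * W z) * pp1 m z)
     + (t * (pp i z * pp m z * W z) * pp1 m z + t * rho i m z * pp2 m z))) (at z)"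
      by (intro DERIV_diff DERIV_add DM DERIV_cmult h_deriv h1_deriv pp_deriv pp1_deriv rho_deriv' prodW_deriv z)
  qed
  then show ?thesis by (simp add: algebra_simps)
qed

lemma Pm: "P m = \<pi> m"
proof -
  have "P m - \<pi> m = 0"
    by (rule poly_zero_Ioo) (auto simp: Pd h_def algebra_simps)
  then show ?thesis by simp
qed

lemma Rp_new: "Rp \<alpha> \<tau>m (P i) (lam i) = 0"
proof (cases "i = m")
  case True
  show ?thesis unfolding True Pm
  proof (rule poly_zero_Ioo)
    fix z :: real assume z: "z \<in> {-1<..<1}"
    have zz: "z \<in> {-1..1}" using z by auto
    show "poly (Rp \<alpha> \<tau>m (\<pi> m) (lam m)) z = 0"
      unfolding poly_Rp pp2_def[symmetric] pp1_def[symmetric] pp_def[symmetric]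
      by (rule alg_m[OF Ept[of z m] Wd[OF z] h1_def h2_def tm[OF zz, folded T_def] tm1[OF z] tm2[OF z]])
  qed
next
  case False
  show ?thesis
  proof (rule poly_zero_Ioo)
    fix z :: real assume z: "z \<in> {-1<..<1}"
    have zz: "z \<in> {-1..1}" using z by auto
    have ne: "lam i \<noteq> lam m" using lam_inj False by (meson injD)
    have r: "(lam i - lam m) * rho i m z = (1-z^2)*W z*(pp1 i z * pp m z - pp i z * pp1 m z)"
      by (rule wronskian[OF False zz])
    have z2: "1 - z^2 \<noteq> 0" using Ioo_facts(1)[OF z] by simp
    show "poly (Rp \<alpha> \<tau>m (P i) (lam i)) z = 0"
      unfolding poly_Rp pp2_def[symmetric] pp1_def[symmetric] pp_def[symmetric]
      by (rule alg_main[OF Ept[of z i] Ept[of z m] Wd[OF z] r ne Ioo_facts(2)[OF z] z2 h1_def h2_def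
          tm[OF zz, folded T_def] tm1[OF z] tm2[OF z] Pd[OF zz, folded pp_def] P1[OF z] P2[OF z]])
  qed
qed

lemma P_ne0: "P i \<noteq> 0"
proof (cases "i = m")
  case True then show ?thesis using Pm pi_Rp by simp
next
  case False
  show ?thesis
  proof
    assume P0: "P i = 0"
    define g where "g z = rho i m z / h z" for z
    have hz: "h z \<noteq> 0" if "z \<in> {-1..1}" for z using h_pos that by fastforce
    have hcont: "continuous_on {-1..1} h" unfolding h_def[abs_def] using rho_cont by (intro continuous_intros)
    have cg: "continuous_on {-1..1} g" unfolding g_def[abs_def]
      using hcont rho_cont hz by (intro continuous_intros) auto
    have dg: "(g has_real_derivative 0) (at x)" if x: "-1 < x" "x < 1" for x
    proof -
      have xI: "x \<in> {-1<..<1}" and xx: "x \<in> {-1..1}" using x by auto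
      have e: "h x * pp i x = t * rho i m x * pp m x" using Pd[OF xx, of i] P0 by (simp add: pp_def)
      have "(g has_real_derivative (pp i x * pp m x * W x * h x - rho i m x * h1 x) / (h x * h x)) (at x)"
        unfolding g_def[abs_def] using hz[OF xx]
        by (auto intro!: derivative_eq_intros rho_deriv' h_deriv xI simp: power2_eq_square)
      moreover have "pp i x * pp m x * W x * h x - rho i m x * h1 x = 0"
        unfolding h1_def using e by (simp add: algebra_simps)
      ultimately show ?thesis by simp
    qed
    have "\<forall>z\<in>{-1..1}. pp i z = 0"
    proof
      fix z :: real assume z: "z \<in> {-1..1}"
      have "g z = g (-1)" by (rule DERIV_isconst2[of "-1" 1 g z]) (use cg dg z in auto)
      then have "rho i m z = 0" using hz[OF z] by (simp add: g_def)
      then show "pp i z = 0" using Pd[OF z, of i] P0 hz[OF z] by (simp add: pp_def)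
    qed
    then have "\<pi> i = 0" by (intro poly_zero_Ioo) (auto simp: pp_def)
    then show False using pi_Rp by simp
  qed
qed

lemma eig_new: "xEigen \<alpha> \<tau>m (P i) (lam i)"
  using xEigen_iff[OF tm_ne0] Rp_new P_ne0 by auto

end


context ctx2 begin

lemma lam_P: "lam i = - (real (degree (P i)) - real (degree \<tau>m)) * (real (degree (P i)) - real (degree \<tau>m) + 2 * \<alpha>)"
  by (rule Rp_degree[OF P_ne0 tm_ne0 Rp_new])

lemma lam_pi: "lam i = - (real (degree (\<pi> i)) - real (degree \<tau>)) * (real (degree (\<pi> i)) - real (degree \<tau>) + 2 * \<alpha>)"
  by (rule Rp_degree[OF pi_Rp(1) tau_ne0 pi_Rp(2)])

lemma inj_degP: "inj (\<lambda>i. degree (P i))"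
proof (rule injI)
  fix i j assume "degree (P i) = degree (P j)"
  then have "lam i = lam j" using lam_P[of i] lam_P[of j] by simp
  then show "i = j" using lam_inj by (meson injD)
qed

lemma cofin_P:
  assumes "finite (UNIV - range (\<lambda>i. degree (\<pi> i)))"
  shows "finite (UNIV - range (\<lambda>i. degree (P i)))"
proof -
  obtain B0 where B0: "\<And>x. x \<in> UNIV - range (\<lambda>i. degree (\<pi> i)) \<Longrightarrow> x < B0"
    using assms finite_nat_bounded by (meson lessThan_iff subsetD)
  define d where "d = degree \<tau>"
  define d' where "d' = degree \<tau>m"
  have "UNIV - range (\<lambda>i. degree (P i)) \<subseteq> {..< B0 + 2 * d' + 1}"
  proof
    fix N assume N: "N \<in> UNIV - range (\<lambda>i. degree (P i))"
    show "N \<in> {..< B0 + 2 * d' + 1}"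
    proof (rule ccontr)
      assume "N \<notin> {..< B0 + 2 * d' + 1}"
      then have NB: "N \<ge> B0 + 2 * d' + 1" by simp
      define K where "K = N - d' + d"
      have "K \<ge> B0" using NB unfolding K_def by linarith
      then have "K \<in> range (\<lambda>i. degree (\<pi> i))" using B0[of K] by force
      then obtain i where i: "degree (\<pi> i) = K" by auto
      have k: "real (degree (\<pi> i)) - real d = real N - real d'" using i NB unfolding K_def by auto
      define k where "k = real N - real d'"
      define k' where "k' = real (degree (P i)) - real d'"
      have "lam i = - k * (k + 2 * \<alpha>)" using lam_pi[of i] k unfolding k_def d_def d'_def by simp
      moreover have "lam i = - k' * (k' + 2 * \<alpha>)" using lam_P[of i] unfolding k'_def d'_def by simp
      ultimately have "k * (k + 2 * \<alpha>) = k' * (k' + 2 * \<alpha>)" by simp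
      then have "(k - k') * (k + k' + 2 * \<alpha>) = 0" by (simp add: algebra_simps)
      then have "k = k' \<or> k + k' + 2 * \<alpha> = 0" by simp
      moreover have "k + k' + 2 * \<alpha> > 0"
        using NB alpha unfolding k_def k'_def by simp
      ultimately have "k = k'" by auto
      then have "degree (P i) = N" unfolding k_def k'_def by simp
      then show False using N by auto
    qed
  qed
  then show ?thesis using finite_subset by blast
qed

end


lemma poly_meas[measurable]: "(\<lambda>z. poly p z :: real) \<in> borel_measurable borel"
  by (intro borel_measurable_continuous_onI continuous_intros)
lemma polysum_meas[measurable]: "(\<lambda>z. \<Sum>i\<in>S. c i * poly (P i) z :: real) \<in> borel_measurable borel"
  by (intro borel_measurable_continuous_onI continuous_intros)
lemma xW_meas[measurable]: "xW a \<tau> \<in> borel_measurable borel"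
  unfolding xW_def[abs_def] by measurable

lemma xW_nonneg: "xW a \<tau> z \<ge> 0"
  unfolding xW_def by simp

lemma I2_cont_gen:
  fixes G :: "real \<Rightarrow> real"
  assumes G: "continuous_on {-1..1} G" and nn: "\<And>z. z \<in> {-1..1} \<Longrightarrow> 0 \<le> G z"
  shows "(\<integral>\<^sup>+z. indicator {-1..1} z * ennreal (G z) \<partial>lborel) = ennreal (integral {-1..1} G)"
proof -
  have eq: "(\<lambda>z. indicator {-1..1} z * ennreal (G z)) = (\<lambda>z. ennreal (indicator {-1..1} z * G z))"
    by (auto split: split_indicator)
  have meas: "(\<lambda>z. indicator {-1..1} z * G z) \<in> borel_measurable borel"
  proof -
    have Sb: "{-1..1::real} \<in> sets borel" by (rule borel_closed) simp
    show ?thesis using borel_measurable_continuous_on_indicator[OF Sb G] by simp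
  qed
  have nn': "\<And>z. 0 \<le> indicator {-1..1} z * G z" using nn by (auto split: split_indicator)
  have "(G has_integral integral {-1..1} G) {-1..1}"
    using integrable_continuous_interval[OF G] by (simp add: has_integral_integral)
  then have "((\<lambda>z. if z \<in> {-1..1} then G z else 0) has_integral integral {-1..1} G) UNIV"
    by (simp only: has_integral_restrict_UNIV)
  moreover have "(\<lambda>z. if z \<in> {-1..1} then G z else 0) = (\<lambda>z. indicator {-1..1} z * G z)"
    by (auto split: split_indicator)
  ultimately have "((\<lambda>z. indicator {-1..1} z * G z) has_integral integral {-1..1} G) UNIV" by simp
  then show ?thesis unfolding eq
    using nn_integral_has_integral_lborel[OF meas nn'] by simp
qed

context ctx begin

lemma I2_W:
  assumes F: "continuous_on {-1..1} F" and nn: "\<And>z. z \<in> {-1..1} \<Longrightarrow> 0 \<le> F z"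
  shows "(\<integral>\<^sup>+z. indicator {-1..1} z * ennreal (F z * xW \<alpha> \<tau> z) \<partial>lborel) = ennreal (integral {-1..1} (\<lambda>z. F z * W z))"
proof -
  have "(\<integral>\<^sup>+z. indicator {-1..1} z * ennreal (F z * xW \<alpha> \<tau> z) \<partial>lborel)
      = (\<integral>\<^sup>+z. indicator {-1..1} z * ennreal (F z * W z) \<partial>lborel)"
  proof (rule nn_integral_cong_AE)
    show "AE z in lborel. indicator {-1..1} z * ennreal (F z * xW \<alpha> \<tau> z) = indicator {-1..1} z * ennreal (F z * W z)"
      using AE_lborel_singleton[of "-1::real"] AE_lborel_singleton[of "1::real"]
    proof eventually_elim
      case (elim z)
      show ?case
      proof (cases "z \<in> {-1..1}")
        case True
        then have "\<bar>z\<bar> < 1" using elim by auto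
        then show ?thesis using xW_eq_W0[OF alpha] by simp
      qed simp
    qed
  qed
  also have "\<dots> = ennreal (integral {-1..1} (\<lambda>z. F z * W z))"
    by (rule I2_cont_gen) (use F W_cont nn W_nonneg in \<open>auto intro!: continuous_intros\<close>)
  finally show ?thesis .
qed

end


context ctx2 begin

lemma xWm_eq: "z \<in> {-1..1} \<Longrightarrow> xW \<alpha> \<tau>m z = xW \<alpha> \<tau> z / (h z)\<^sup>2"
  unfolding xW_def using tm[of z] by (simp add: power_mult_distrib)

lemma hz: "z \<in> {-1..1} \<Longrightarrow> h z \<noteq> 0" using h_pos by fastforce

lemma hcont: "continuous_on {-1..1} h" unfolding h_def[abs_def] using rho_cont by (intro continuous_intros)

lemma ppcont: "continuous_on S (pp i)" unfolding pp_def by (intro continuous_intros)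

lemma step2:
  assumes g: "continuous_on {-1..1} g" and d2: "\<delta>2 > 0"
    and comp: "xComplete (xW \<alpha> \<tau>) \<pi>"
  shows "\<exists>S c. finite S \<and> (\<integral>\<^sup>+z. indicator {-1..1} z *
            ennreal ((g z - (\<Sum>i\<in>S. c i * poly (P i) z))\<^sup>2 * xW \<alpha> \<tau>m z) \<partial>lborel) < ennreal \<delta>2"
proof -
  define q where "q = pp m"
  have qc: "continuous_on {-1..1} q" unfolding q_def by (rule ppcont)
  define gi where "gi s = g s * q s * W s / (h s)\<^sup>2" for s
  have gic: "continuous_on {-1..1} gi" unfolding gi_def[abs_def]
    using g qc W_cont hcont hz by (intro continuous_intros) auto
  define Gf where "Gf z = integral {-1..z} gi" for z
  have Gf_within: "(Gf has_real_derivative gi x) (at x within {-1..1})" if "x \<in> {-1..1}" for x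
    unfolding Gf_def[abs_def] by (rule integral_has_real_derivative[OF gic that])
  have Gfc: "continuous_on {-1..1} Gf" by (rule cont_from_deriv) (use Gf_within in blast)
  have Gf_deriv: "(Gf has_real_derivative gi x) (at x)" if "x \<in> {-1<..<1}" for x
  proof -
    have "at x within {-1..1} = at x" using that by (intro at_within_interior) auto
    then show ?thesis using Gf_within[of x] that by auto
  qed
  define u where "u z = g z / h z + t * q z * Gf z" for z
  have uc: "continuous_on {-1..1} u" unfolding u_def[abs_def]
    using g qc Gfc hcont hz by (intro continuous_intros) auto
  have uqWc: "continuous_on {-1..1} (\<lambda>s. u s * q s * W s)" using uc qc W_cont by (intro continuous_intros)
  have key: "integral {-1..z} (\<lambda>s. u s * q s * W s) = h z * Gf z" if z: "z \<in> {-1..1}" for z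
  proof -
    define f where "f z = integral {-1..z} (\<lambda>s. u s * q s * W s) - h z * Gf z" for z
    have fc: "continuous_on {-1..1} f" unfolding f_def[abs_def]
    proof (intro continuous_intros)
      show "continuous_on {-1..1} (\<lambda>x. integral {-1..x} (\<lambda>s. u s * q s * W s))"
        by (rule cont_from_deriv) (use integral_has_real_derivative[OF uqWc] in blast)
    qed (use hcont Gfc in auto)
    have df: "(f has_real_derivative 0) (at x)" if x: "-1 < x" "x < 1" for x
    proof -
      have xI: "x \<in> {-1<..<1}" and xx: "x \<in> {-1..1}" using x by auto
      have "at x within {-1..1} = at x" using xI by (intro at_within_interior) auto
      then have d1: "((\<lambda>x. integral {-1..x} (\<lambda>s. u s * q s * W s)) has_real_derivative u x * q x * W x) (at x)"
        using integral_has_real_derivative[OF uqWc xx] by simp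
      have d2: "((\<lambda>x. h x * Gf x) has_real_derivative h1 x * Gf x + h x * gi x) (at x)"
        by (intro DM h_deriv Gf_deriv xI)
      have eq: "u x * q x * W x = h1 x * Gf x + h x * gi x"
        unfolding u_def h1_def gi_def q_def using hz[OF xx] by (simp add: field_simps power2_eq_square)
      show ?thesis unfolding f_def[abs_def] using DERIV_diff[OF d1 d2] eq by simp
    qed
    have "f z = f (-1)" by (rule DERIV_isconst2[of "-1" 1 f z]) (use fc df z in auto)
    also have "f (-1) = 0" by (simp add: f_def Gf_def)
    finally show ?thesis by (simp add: f_def)
  qed
  define uext where "uext z = (if z \<in> {-1..1} then u z else 0)" for z
  have Sb: "{-1..1::real} \<in> sets borel" by (rule borel_closed) simp
  have uext_meas: "uext \<in> borel_measurable lborel"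
    unfolding uext_def[abs_def] measurable_lborel2
    by (rule borel_measurable_continuous_on_if[OF Sb uc]) (rule continuous_on_const)
  have u2c: "continuous_on {-1..1} (\<lambda>z. (u z)\<^sup>2)" using uc by (intro continuous_intros)
  have I2u: "(\<integral>\<^sup>+ z. indicator {-1..1} z * ennreal ((uext z)\<^sup>2 * xW \<alpha> \<tau> z) \<partial>lborel)
      = ennreal (integral {-1..1} (\<lambda>z. (u z)\<^sup>2 * W z))"
  proof -
    have "(\<integral>\<^sup>+ z. indicator {-1..1} z * ennreal ((uext z)\<^sup>2 * xW \<alpha> \<tau> z) \<partial>lborel)
       = (\<integral>\<^sup>+ z. indicator {-1..1} z * ennreal ((u z)\<^sup>2 * xW \<alpha> \<tau> z) \<partial>lborel)"
      by (rule nn_integral_cong) (auto simp: uext_def split: split_indicator)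
    also have "\<dots> = ennreal (integral {-1..1} (\<lambda>z. (u z)\<^sup>2 * W z))"
      by (rule I2_W[OF u2c]) simp
    finally show ?thesis .
  qed
  have L2u: "xL2 (xW \<alpha> \<tau>) uext"
    unfolding xL2_def using uext_meas I2u by simp
  define Q where "Q = integral {-1..1} (\<lambda>z. q z * q z * W z)"
  have qqWc: "continuous_on {-1..1} (\<lambda>z. q z * q z * W z)" using qc W_cont by (intro continuous_intros)
  have Q0: "Q \<ge> 0" unfolding Q_def
    by (rule integral_nonneg[OF integrable_continuous_interval[OF qqWc]]) (auto intro!: mult_nonneg_nonneg[OF _ W_nonneg])
  define M where "M = t\<^sup>2 * (1 + Q)\<^sup>2 * Q / (2 * hc\<^sup>2)"
  have M0: "M \<ge> 0" unfolding M_def using Q0 by simp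
  define \<delta> where "\<delta> = \<delta>2 / (2 + M)"
  have \<delta>0: "\<delta> > 0" unfolding \<delta>_def using M0 d2 by simp
  obtain S c where S: "finite S" and Sc: "(\<integral>\<^sup>+z. indicator {-1..1} z *
            ennreal ((uext z - (\<Sum>i\<in>S. c i * poly (\<pi> i) z))\<^sup>2 * xW \<alpha> \<tau> z) \<partial>lborel) < ennreal \<delta>"
    using comp L2u \<delta>0 unfolding xComplete_def by blast
  define s where "s z = (\<Sum>i\<in>S. c i * pp i z)" for z
  have sc: "continuous_on {-1..1} s" unfolding s_def[abs_def] pp_def by (intro continuous_intros)
  define e where "e z = u z - s z" for z
  have ec: "continuous_on {-1..1} e" unfolding e_def[abs_def] using uc sc by (intro continuous_intros)
  define E where "E = integral {-1..1} (\<lambda>z. (e z)\<^sup>2 * W z)"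
  have e2c: "continuous_on {-1..1} (\<lambda>z. (e z)\<^sup>2)" using ec by (intro continuous_intros)
  have e2Wc: "continuous_on {-1..1} (\<lambda>z. (e z)\<^sup>2 * W z)" using ec W_cont by (intro continuous_intros)
  have E0: "E \<ge> 0" unfolding E_def
    by (rule integral_nonneg[OF integrable_continuous_interval[OF e2Wc]]) (auto intro!: mult_nonneg_nonneg[OF _ W_nonneg])
  have "(\<integral>\<^sup>+z. indicator {-1..1} z *
            ennreal ((uext z - (\<Sum>i\<in>S. c i * poly (\<pi> i) z))\<^sup>2 * xW \<alpha> \<tau> z) \<partial>lborel)
     = (\<integral>\<^sup>+z. indicator {-1..1} z * ennreal ((e z)\<^sup>2 * xW \<alpha> \<tau> z) \<partial>lborel)"
    by (rule nn_integral_cong) (auto simp: uext_def e_def s_def pp_def split: split_indicator)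
  also have "\<dots> = ennreal E" unfolding E_def by (rule I2_W[OF e2c]) simp
  finally have "ennreal E < ennreal \<delta>" using Sc by simp
  then have E\<delta>: "E < \<delta>" using E0 by (simp add: ennreal_less_iff)
  have intg: "f integrable_on {-1..z}" if "continuous_on {-1..1} f" "z \<in> {-1..1}" for f :: "real \<Rightarrow> real" and z
    by (rule integrable_continuous_interval, rule continuous_on_subset[OF that(1)]) (use that(2) in auto)
  have sqWc: "continuous_on {-1..1} (\<lambda>x. s x * q x * W x)" using sc qc W_cont by (intro continuous_intros)
  have eqWc: "continuous_on {-1..1} (\<lambda>x. e x * q x * W x)" using ec qc W_cont by (intro continuous_intros)
  have lin: "(\<Sum>i\<in>S. c i * poly (P i) z) = h z * s z - t * q z * integral {-1..z} (\<lambda>x. s x * q x * W x)"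
    if z: "z \<in> {-1..1}" for z
  proof -
    have ii: "(\<lambda>x. c a * (pp a x * pp m x * W x)) integrable_on {-1..z}" for a
      by (rule intg[OF _ z]) (use ppcont W_cont in \<open>auto intro!: continuous_intros\<close>)
    have "(\<lambda>x. s x * q x * W x) = (\<lambda>x. \<Sum>i\<in>S. c i * (pp i x * pp m x * W x))"
      by (rule ext) (simp add: s_def q_def sum_distrib_right mult.assoc)
    then have "integral {-1..z} (\<lambda>x. s x * q x * W x) = (\<Sum>i\<in>S. integral {-1..z} (\<lambda>x. c i * (pp i x * pp m x * W x)))"
      using integral_sum[OF S ii] by simp
    also have "\<dots> = (\<Sum>i\<in>S. c i * rho i m z)" by (simp add: rho_def pp_def)
    finally have *: "integral {-1..z} (\<lambda>x. s x * q x * W x) = (\<Sum>i\<in>S. c i * rho i m z)" .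
    have "(\<Sum>i\<in>S. c i * poly (P i) z) = (\<Sum>i\<in>S. c i * (h z * pp i z - t * rho i m z * q z))"
      using Pd[OF z] by (simp add: pp_def q_def)
    also have "\<dots> = h z * s z - t * q z * (\<Sum>i\<in>S. c i * rho i m z)"
      by (simp add: s_def sum_distrib_left sum_subtractf algebra_simps)
    finally show ?thesis using * by simp
  qed
  have diffid: "g z - (\<Sum>i\<in>S. c i * poly (P i) z) = h z * e z - t * q z * integral {-1..z} (\<lambda>x. e x * q x * W x)"
    if z: "z \<in> {-1..1}" for z
  proof -
    define IU where "IU = integral {-1..z} (\<lambda>x. u x * q x * W x)"
    define IS where "IS = integral {-1..z} (\<lambda>x. s x * q x * W x)"
    define IE where "IE = integral {-1..z} (\<lambda>x. e x * q x * W x)"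
    have "IE = IU - IS"
      unfolding IE_def IU_def IS_def e_def
      using integral_diff[OF intg[OF uqWc z] intg[OF sqWc z]] by (simp add: left_diff_distrib)
    moreover have "g z = h z * u z - t * q z * IU"
    proof -
      have "g z = h z * u z - t * q z * (h z * Gf z)" unfolding u_def using hz[OF z] by (simp add: field_simps)
      then show ?thesis using key[OF z] unfolding IU_def by simp
    qed
    moreover have "(\<Sum>i\<in>S. c i * poly (P i) z) = h z * s z - t * q z * IS" using lin[OF z] unfolding IS_def .
    ultimately show ?thesis unfolding IE_def[symmetric] using e_def[of z] by algebra
  qed
  define J where "J = sqrt \<delta> * (1 + Q) / 2"
  define k where "k = sqrt \<delta>"
  have k0: "k > 0" unfolding k_def using \<delta>0 by simp
  have Ibound: "\<bar>integral {-1..z} (\<lambda>x. e x * q x * W x)\<bar> \<le> J" if z: "z \<in> {-1..1}" for z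
  proof -
    define B where "B x = ((e x)\<^sup>2 / k + k * (q x * q x)) / 2 * W x" for x
    have Bc: "continuous_on {-1..1} B" unfolding B_def[abs_def] using ec qc W_cont k0 by (intro continuous_intros) auto
    have Bnn: "\<forall>x\<in>{-1..1}. 0 \<le> B x" unfolding B_def using k0 W_nonneg by (auto intro!: mult_nonneg_nonneg)
    have amgm: "\<bar>e x * q x * W x\<bar> \<le> B x" if x: "x \<in> {-1..1}" for x
    proof -
      have "2 * k * \<bar>e x * q x\<bar> \<le> (e x)\<^sup>2 + k\<^sup>2 * (q x * q x)"
      proof -
        have "0 \<le> (\<bar>e x\<bar> - k * \<bar>q x\<bar>)\<^sup>2" by simp
        then show ?thesis using k0 by (simp add: power2_eq_square algebra_simps abs_mult)
      qed
      then have "\<bar>e x * q x\<bar> \<le> ((e x)\<^sup>2 / k + k * (q x * q x)) / 2"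
        using k0 by (simp add: field_simps power2_eq_square)
      then have "\<bar>e x * q x\<bar> * W x \<le> ((e x)\<^sup>2 / k + k * (q x * q x)) / 2 * W x"
        using W_nonneg[OF x] by (rule mult_right_mono)
      then show ?thesis unfolding B_def using W_nonneg[OF x] by (simp add: abs_mult)
    qed
    have "\<bar>integral {-1..z} (\<lambda>x. e x * q x * W x)\<bar> \<le> integral {-1..z} B"
      using integral_norm_bound_integral[OF intg[OF eqWc z] intg[OF Bc z]] amgm z
      by (auto simp: real_norm_def)
    also have "\<dots> \<le> integral {-1..1} B"
      by (rule integral_subset_le[OF _ intg[OF Bc z] integrable_continuous_interval[OF Bc] Bnn]) (use z in auto)
    also have "integral {-1..1} B = (E / k + k * Q) / 2"
    proof -
      have "B = (\<lambda>x. (1 / (2 * k)) * ((e x)\<^sup>2 * W x) + (k / 2) * (q x * q x * W x))"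
        by (rule ext) (simp add: B_def field_simps)
      then have "integral {-1..1} B = integral {-1..1} (\<lambda>x. (1 / (2 * k)) * ((e x)\<^sup>2 * W x) + (k / 2) * (q x * q x * W x))"
        by simp
      also have "\<dots> = (1 / (2 * k)) * E + (k / 2) * Q"
      proof -
        have i1: "(\<lambda>x. (1 / (2 * k)) * ((e x)\<^sup>2 * W x)) integrable_on {-1..1}"
          by (rule integrable_continuous_interval) (intro continuous_on_mult_left e2Wc)
        have i2: "(\<lambda>x. (k / 2) * (q x * q x * W x)) integrable_on {-1..1}"
          by (rule integrable_continuous_interval) (intro continuous_on_mult_left qqWc)
        show ?thesis unfolding E_def Q_def integral_add[OF i1 i2] integral_mult_right ..
      qed
      finally show ?thesis using k0 by (simp add: field_simps)
    qed
    also have "\<dots> \<le> (\<delta> / k + k * Q) / 2" using E\<delta> k0 by (simp add: divide_right_mono)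
    also have "\<dots> = J" unfolding J_def k_def using \<delta>0
      by (simp add: real_div_sqrt algebra_simps add_divide_distrib)
    finally show ?thesis .
  qed
  have J0: "J \<ge> 0" unfolding J_def using Q0 \<delta>0 by simp
  define K where "K = 2 * t\<^sup>2 * J\<^sup>2 / hc\<^sup>2"
  have K0: "K \<ge> 0" unfolding K_def by simp
  have pw: "(g z - (\<Sum>i\<in>S. c i * poly (P i) z))\<^sup>2 * xW \<alpha> \<tau>m z \<le> (2 * (e z)\<^sup>2 + K * (q z * q z)) * xW \<alpha> \<tau> z"
    if z: "z \<in> {-1..1}" for z
  proof -
    define Ie where "Ie = integral {-1..z} (\<lambda>x. e x * q x * W x)"
    define X where "X = xW \<alpha> \<tau> z"
    define H where "H = h z"
    have X0: "X \<ge> 0" unfolding X_def by (rule xW_nonneg)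
    have Hc: "hc \<le> H" unfolding H_def using h_bounds(1)[OF z] .
    have H0: "H > 0" using Hc hc_pos by simp
    have IeJ: "Ie\<^sup>2 \<le> J\<^sup>2" using Ibound[OF z] unfolding Ie_def
      by (metis abs_le_square_iff abs_of_nonneg J0)
    have a: "(H * e z - t * q z * Ie)\<^sup>2 \<le> 2 * H\<^sup>2 * (e z)\<^sup>2 + 2 * (t\<^sup>2 * (q z)\<^sup>2 * Ie\<^sup>2)"
    proof -
      have "0 \<le> (H * e z + t * q z * Ie)\<^sup>2" by simp
      then show ?thesis by (simp add: power2_eq_square algebra_simps)
    qed
    have b: "Ie\<^sup>2 / H\<^sup>2 \<le> J\<^sup>2 / hc\<^sup>2"
      by (rule frac_le) (use IeJ Hc hc_pos in \<open>auto intro: power_mono\<close>)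
    have "(g z - (\<Sum>i\<in>S. c i * poly (P i) z))\<^sup>2 * xW \<alpha> \<tau>m z = (H * e z - t * q z * Ie)\<^sup>2 * X / H\<^sup>2"
      unfolding diffid[OF z] xWm_eq[OF z] Ie_def X_def H_def by simp
    also have "\<dots> \<le> (2 * H\<^sup>2 * (e z)\<^sup>2 + 2 * (t\<^sup>2 * (q z)\<^sup>2 * Ie\<^sup>2)) * X / H\<^sup>2"
      by (intro divide_right_mono mult_right_mono a X0) simp
    also have "\<dots> = 2 * (e z)\<^sup>2 * X + 2 * (t\<^sup>2 * (q z)\<^sup>2 * X) * (Ie\<^sup>2 / H\<^sup>2)"
      using H0 by (simp add: field_simps)
    also have "\<dots> \<le> 2 * (e z)\<^sup>2 * X + 2 * (t\<^sup>2 * (q z)\<^sup>2 * X) * (J\<^sup>2 / hc\<^sup>2)"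
      by (intro add_left_mono mult_left_mono b) (use X0 in simp)
    also have "\<dots> = (2 * (e z)\<^sup>2 + K * (q z * q z)) * X"
      unfolding K_def by (simp add: field_simps power2_eq_square)
    finally show ?thesis unfolding X_def .
  qed
  have Fc: "continuous_on {-1..1} (\<lambda>z. 2 * (e z)\<^sup>2 + K * (q z * q z))" using ec qc by (intro continuous_intros)
  have "(\<integral>\<^sup>+z. indicator {-1..1} z * ennreal ((g z - (\<Sum>i\<in>S. c i * poly (P i) z))\<^sup>2 * xW \<alpha> \<tau>m z) \<partial>lborel)
     \<le> (\<integral>\<^sup>+z. indicator {-1..1} z * ennreal ((2 * (e z)\<^sup>2 + K * (q z * q z)) * xW \<alpha> \<tau> z) \<partial>lborel)"
    by (rule nn_integral_mono) (auto split: split_indicator intro!: ennreal_leI pw)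
  also have "\<dots> = ennreal (integral {-1..1} (\<lambda>z. (2 * (e z)\<^sup>2 + K * (q z * q z)) * W z))"
    by (rule I2_W[OF Fc]) (use K0 in simp)
  also have "integral {-1..1} (\<lambda>z. (2 * (e z)\<^sup>2 + K * (q z * q z)) * W z) = 2 * E + K * Q"
  proof -
    have "integral {-1..1} (\<lambda>z. (2 * (e z)\<^sup>2 + K * (q z * q z)) * W z)
       = integral {-1..1} (\<lambda>z. 2 * ((e z)\<^sup>2 * W z) + K * (q z * q z * W z))"
      by (simp add: algebra_simps)
    also have "\<dots> = 2 * E + K * Q"
    proof -
      have i1: "(\<lambda>x. 2 * ((e x)\<^sup>2 * W x)) integrable_on {-1..1}"
        by (rule integrable_continuous_interval) (intro continuous_on_mult_left e2Wc)
      have i2: "(\<lambda>x. K * (q x * q x * W x)) integrable_on {-1..1}"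
        by (rule integrable_continuous_interval) (intro continuous_on_mult_left qqWc)
      show ?thesis unfolding E_def Q_def integral_add[OF i1 i2] integral_mult_right ..
    qed
    finally show ?thesis .
  qed
  also have "ennreal (2 * E + K * Q) < ennreal \<delta>2"
  proof -
    have J2: "J\<^sup>2 = \<delta> * (1 + Q)\<^sup>2 / 4" unfolding J_def using \<delta>0 by (simp add: power_mult_distrib power_divide)
    have "K * Q = \<delta> * M" unfolding K_def M_def J2 using hc_pos by (simp add: field_simps)
    moreover have "\<delta> * (2 + M) = \<delta>2" unfolding \<delta>_def using M0 by simp
    ultimately have "2 * E + K * Q < \<delta>2" using E\<delta> by (simp add: algebra_simps)
    then show ?thesis using d2 by (intro ennreal_lessI)
  qed
  finally show ?thesis using S by blast
qed

end


lemma enn_lt: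
  assumes "(X::ennreal) < ennreal x"
  obtains a where "X = ennreal a" "0 \<le> a" "a < x"
proof -
  have "X \<noteq> top" using assms by auto
  then obtain a where a: "X = ennreal a" "0 \<le> a" by (cases X) auto
  then have "a < x" using assms by (simp add: ennreal_less_iff)
  then show ?thesis using that a by blast
qed

lemma polysum_meas'[measurable]: "(\<lambda>z. \<Sum>i\<in>S. c i * poly (P i) z :: real) \<in> borel_measurable lborel"
  using polysum_meas by simp
lemma xW_meas'[measurable]: "xW a \<tau> \<in> borel_measurable lborel"
  using xW_meas by simp

lemma I2_cmult:
  fixes F :: "real \<Rightarrow> real" and c :: real
  assumes "c \<ge> 0" "\<And>z. F z \<ge> 0" "F \<in> borel_measurable lborel"
  shows "(\<integral>\<^sup>+z. indicator {-1..1} z * ennreal (c * F z) \<partial>lborel)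
     = ennreal c * (\<integral>\<^sup>+z. indicator {-1..1} z * ennreal (F z) \<partial>lborel)"
proof -
  have "(\<integral>\<^sup>+z. indicator {-1..1} z * ennreal (c * F z) \<partial>lborel)
     = (\<integral>\<^sup>+z. ennreal c * (indicator {-1..1} z * ennreal (F z)) \<partial>lborel)"
    using assms(1,2) by (intro nn_integral_cong) (simp add: ennreal_mult mult.left_commute)
  also have "\<dots> = ennreal c * (\<integral>\<^sup>+z. indicator {-1..1} z * ennreal (F z) \<partial>lborel)"
  proof (rule nn_integral_cmult)
    have Sb: "{-1..1::real} \<in> sets borel" by (rule borel_closed) simp
    have Fb: "F \<in> borel_measurable borel" using assms(3) by simp
    show "(\<lambda>z. indicator {-1..1} z * ennreal (F z)) \<in> borel_measurable lborel"
      unfolding measurable_lborel2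
    proof -
      have Ib: "(indicator {-1..1::real} :: real \<Rightarrow> ennreal) \<in> borel_measurable borel"
        by (rule borel_measurable_indicator[OF Sb])
      show "(\<lambda>z. indicator {-1..1} z * ennreal (F z)) \<in> borel_measurable borel"
        by (rule borel_measurable_times_ennreal[OF Ib measurable_compose[OF Fb measurable_ennreal]])
    qed
  qed
  finally show ?thesis .
qed

context ctx2 begin

lemma complete_new:
  assumes comp: "xComplete (xW \<alpha> \<tau>) \<pi>"
  shows "xComplete (xW \<alpha> \<tau>m) P"
  unfolding xComplete_def
proof (intro allI impI)
  fix f :: "real \<Rightarrow> real" and \<epsilon> :: real
  assume L2: "xL2 (xW \<alpha> \<tau>m) f" and \<epsilon>: "\<epsilon> > 0"
  have fm[measurable]: "f \<in> borel_measurable lborel" using L2 unfolding xL2_def by simp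
  have fin: "(\<integral>\<^sup>+ z. indicator {-1..1} z * ennreal ((f z)\<^sup>2 * xW \<alpha> \<tau>m z) \<partial>lborel) < \<infinity>"
    using L2 unfolding xL2_def by simp
  have hC0: "hC > 0" using hc_pos h_bounds[of 0] by simp
  have L2f: "xL2 (xW \<alpha> \<tau>) f"
  proof -
    have "(\<integral>\<^sup>+ z. indicator {-1..1} z * ennreal ((f z)\<^sup>2 * xW \<alpha> \<tau> z) \<partial>lborel)
        \<le> (\<integral>\<^sup>+ z. indicator {-1..1} z * ennreal (hC\<^sup>2 * ((f z)\<^sup>2 * xW \<alpha> \<tau>m z)) \<partial>lborel)"
    proof (rule nn_integral_mono)
      fix z :: real
      show "indicator {-1..1} z * ennreal ((f z)\<^sup>2 * xW \<alpha> \<tau> z)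
          \<le> indicator {-1..1} z * ennreal (hC\<^sup>2 * ((f z)\<^sup>2 * xW \<alpha> \<tau>m z))"
      proof (cases "z \<in> {-1..1}")
        case True
        have H: "0 < h z" "h z \<le> hC" using h_pos[OF True] h_bounds(2)[OF True] by auto
        have "(f z)\<^sup>2 * xW \<alpha> \<tau> z = (h z)\<^sup>2 * ((f z)\<^sup>2 * xW \<alpha> \<tau>m z)"
          using H unfolding xWm_eq[OF True] by (simp add: field_simps)
        also have "\<dots> \<le> hC\<^sup>2 * ((f z)\<^sup>2 * xW \<alpha> \<tau>m z)"
          by (rule mult_right_mono) (use H in \<open>auto intro: power_mono simp: xW_nonneg\<close>)
        finally show ?thesis using True by (auto intro: ennreal_leI)
      qed simp
    qed
    also have "\<dots> = ennreal (hC\<^sup>2) * (\<integral>\<^sup>+ z. indicator {-1..1} z * ennreal ((f z)\<^sup>2 * xW \<alpha> \<tau>m z) \<partial>lborel)"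
      by (rule I2_cmult) (auto simp: xW_nonneg)
    also have "\<dots> < \<infinity>" using fin by (simp add: ennreal_mult_less_top)
    finally show ?thesis unfolding xL2_def using fm by simp
  qed
  define \<delta>1 where "\<delta>1 = \<epsilon> * hc\<^sup>2 / 4"
  have \<delta>1: "\<delta>1 > 0" unfolding \<delta>1_def using \<epsilon> hc_pos by simp
  obtain S0 c0 where S0: "finite S0" and Sc0: "(\<integral>\<^sup>+z. indicator {-1..1} z *
            ennreal ((f z - (\<Sum>i\<in>S0. c0 i * poly (\<pi> i) z))\<^sup>2 * xW \<alpha> \<tau> z) \<partial>lborel) < ennreal \<delta>1"
    using comp L2f \<delta>1 unfolding xComplete_def by blast
  define s0 where "s0 z = (\<Sum>i\<in>S0. c0 i * poly (\<pi> i) z)" for z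
  have s0c: "continuous_on {-1..1} s0" unfolding s0_def[abs_def] by (intro continuous_intros)
  obtain S c where S: "finite S" and Sc: "(\<integral>\<^sup>+z. indicator {-1..1} z *
            ennreal ((s0 z - (\<Sum>i\<in>S. c i * poly (P i) z))\<^sup>2 * xW \<alpha> \<tau>m z) \<partial>lborel) < ennreal (\<epsilon> / 4)"
    using step2[OF s0c _ comp, of "\<epsilon> / 4"] \<epsilon> by auto
  obtain a1 where a1: "(\<integral>\<^sup>+z. indicator {-1..1} z *
            ennreal ((f z - s0 z)\<^sup>2 * xW \<alpha> \<tau> z) \<partial>lborel) = ennreal a1" "0 \<le> a1" "a1 < \<delta>1"
    using Sc0 unfolding s0_def[symmetric] by (rule enn_lt)
  obtain a2 where a2: "(\<integral>\<^sup>+z. indicator {-1..1} z *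
            ennreal ((s0 z - (\<Sum>i\<in>S. c i * poly (P i) z))\<^sup>2 * xW \<alpha> \<tau>m z) \<partial>lborel) = ennreal a2" "0 \<le> a2" "a2 < \<epsilon> / 4"
    using Sc by (rule enn_lt)
  have s0m[measurable]: "s0 \<in> borel_measurable lborel" unfolding s0_def[abs_def] by measurable
  define A where "A z = 2 / hc\<^sup>2 * ((f z - s0 z)\<^sup>2 * xW \<alpha> \<tau> z)" for z
  define B where "B z = 2 * ((s0 z - (\<Sum>i\<in>S. c i * poly (P i) z))\<^sup>2 * xW \<alpha> \<tau>m z)" for z
  have "(\<integral>\<^sup>+z. indicator {-1..1} z * ennreal ((f z - (\<Sum>i\<in>S. c i * poly (P i) z))\<^sup>2 * xW \<alpha> \<tau>m z) \<partial>lborel)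
      \<le> (\<integral>\<^sup>+z. indicator {-1..1} z * ennreal (A z) + indicator {-1..1} z * ennreal (B z) \<partial>lborel)"
  proof (rule nn_integral_mono)
    fix z :: real
    show "indicator {-1..1} z * ennreal ((f z - (\<Sum>i\<in>S. c i * poly (P i) z))\<^sup>2 * xW \<alpha> \<tau>m z)
        \<le> indicator {-1..1} z * ennreal (A z) + indicator {-1..1} z * ennreal (B z)"
    proof (cases "z \<in> {-1..1}")
      case True
      define Y where "Y = xW \<alpha> \<tau> z"
      define x1 where "x1 = f z - s0 z"
      define x2 where "x2 = s0 z - (\<Sum>i\<in>S. c i * poly (P i) z)"
      have Y0: "Y \<ge> 0" unfolding Y_def by (rule xW_nonneg)
      have H: "hc \<le> h z" "0 < hc" using h_bounds(1)[OF True] hc_pos by auto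
      have Wm: "xW \<alpha> \<tau>m z = Y / (h z)\<^sup>2" unfolding Y_def by (rule xWm_eq[OF True])
      have q1: "(x1 + x2)\<^sup>2 \<le> 2 * x1\<^sup>2 + 2 * x2\<^sup>2"
      proof -
        have "0 \<le> (x1 - x2)\<^sup>2" by simp
        then show ?thesis by (simp add: power2_eq_square algebra_simps)
      qed
      have q2: "x1\<^sup>2 * (Y / (h z)\<^sup>2) \<le> x1\<^sup>2 * (Y / hc\<^sup>2)"
        by (intro mult_left_mono divide_left_mono power_mono) (use H Y0 in auto)
      have "(f z - (\<Sum>i\<in>S. c i * poly (P i) z))\<^sup>2 * xW \<alpha> \<tau>m z = (x1 + x2)\<^sup>2 * (Y / (h z)\<^sup>2)"
        unfolding Wm x1_def x2_def by simp
      also have "\<dots> \<le> (2 * x1\<^sup>2 + 2 * x2\<^sup>2) * (Y / (h z)\<^sup>2)"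
        by (rule mult_right_mono[OF q1]) (use Y0 in simp)
      also have "\<dots> = 2 * (x1\<^sup>2 * (Y / (h z)\<^sup>2)) + B z"
        unfolding B_def Wm x2_def by (simp add: algebra_simps)
      also have "\<dots> \<le> 2 * (x1\<^sup>2 * (Y / hc\<^sup>2)) + B z" using q2 by simp
      also have "2 * (x1\<^sup>2 * (Y / hc\<^sup>2)) = A z" unfolding A_def x1_def Y_def by simp
      finally have le: "(f z - (\<Sum>i\<in>S. c i * poly (P i) z))\<^sup>2 * xW \<alpha> \<tau>m z \<le> A z + B z" .
      have A0: "A z \<ge> 0" "B z \<ge> 0" unfolding A_def B_def by (auto simp: xW_nonneg)
      then show ?thesis using True le by (simp add: ennreal_plus[symmetric] ennreal_leI del: ennreal_plus)
    qed simp
  qed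
  also have "\<dots> = (\<integral>\<^sup>+z. indicator {-1..1} z * ennreal (A z) \<partial>lborel) + (\<integral>\<^sup>+z. indicator {-1..1} z * ennreal (B z) \<partial>lborel)"
    by (rule nn_integral_add) (auto simp: A_def B_def)
  also have "(\<integral>\<^sup>+z. indicator {-1..1} z * ennreal (A z) \<partial>lborel) = ennreal (2 / hc\<^sup>2) * ennreal a1"
    unfolding A_def a1(1)[symmetric] by (rule I2_cmult) (auto simp: xW_nonneg)
  also have "(\<integral>\<^sup>+z. indicator {-1..1} z * ennreal (B z) \<partial>lborel) = ennreal 2 * ennreal a2"
    unfolding B_def a2(1)[symmetric] by (rule I2_cmult) (auto simp: xW_nonneg)
  also have "ennreal (2 / hc\<^sup>2) * ennreal a1 + ennreal 2 * ennreal a2 = ennreal (2 / hc\<^sup>2 * a1 + 2 * a2)"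
  proof -
    have "ennreal (2 / hc\<^sup>2) * ennreal a1 = ennreal (2 / hc\<^sup>2 * a1)" by (rule ennreal_mult[symmetric]) (use a1(2) in auto)
    moreover have "ennreal 2 * ennreal a2 = ennreal (2 * a2)" by (rule ennreal_mult[symmetric]) (use a2(2) in auto)
    moreover have "ennreal (2 / hc\<^sup>2 * a1) + ennreal (2 * a2) = ennreal (2 / hc\<^sup>2 * a1 + 2 * a2)"
      using a1(2) a2(2) by (intro ennreal_plus[symmetric]) auto
    ultimately show ?thesis by simp
  qed
  also have "\<dots> < ennreal \<epsilon>"
  proof (rule ennreal_lessI[OF \<epsilon>])
    have "2 / hc\<^sup>2 * a1 < 2 / hc\<^sup>2 * \<delta>1" using a1(3) hc_pos by (intro mult_strict_left_mono) auto
    also have "2 / hc\<^sup>2 * \<delta>1 = \<epsilon> / 2" unfolding \<delta>1_def using hc_pos by (simp add: field_simps)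
    finally show "2 / hc\<^sup>2 * a1 + 2 * a2 < \<epsilon>" using a2(3) by simp
  qed
  finally show "\<exists>S c. finite S \<and> (\<integral>\<^sup>+z. indicator {-1..1} z *
            ennreal ((f z - (\<Sum>i\<in>S. c i * poly (P i) z))\<^sup>2 * xW \<alpha> \<tau>m z) \<partial>lborel) < ennreal \<epsilon>"
    using S by blast
qed

end


theorem mainTheorem14:
  fixes \<alpha> :: real and \<tau> :: "real poly" and \<pi> :: "nat \<Rightarrow> real poly"
    and lam :: "nat \<Rightarrow> real" and m :: nat and t :: real
  assumes half_int: "\<alpha> - 1/2 \<in> \<nat>"
    and eig: "\<And>i. xEigen \<alpha> \<tau> (\<pi> i) (lam i)"
    and lam_distinct: "inj lam"
    and rho_rational: "\<And>i j. \<exists>p q. q \<noteq> 0 \<and>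
          (\<forall>z\<in>{-1..1}. poly q z \<noteq> 0 \<longrightarrow> xrho \<alpha> \<tau> \<pi> i j z = poly p z / poly q z)"
    and tau_m_poly: "\<And>k s. \<exists>q. \<forall>z\<in>{-1..1}.
          poly q z = poly \<tau> z * (1 + s * xrho \<alpha> \<tau> \<pi> k k z)"
    and pi_m_poly: "\<And>k s i. \<exists>q. \<forall>z\<in>{-1..1}.
          poly q z = (1 + s * xrho \<alpha> \<tau> \<pi> k k z) * poly (\<pi> i) z
                     - s * xrho \<alpha> \<tau> \<pi> i k z * poly (\<pi> k) z"
    and fam: "xGegFamily \<alpha> \<tau> \<pi>"
    and pos: "1 + t * xnu \<alpha> \<tau> \<pi> m > 0"
  shows "\<forall>\<tau>m P.
           (\<forall>z\<in>{-1..1}. poly \<tau>m z = poly \<tau> z * (1 + t * xrho \<alpha> \<tau> \<pi> m m z)) \<longrightarrow>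
           (\<forall>i. \<forall>z\<in>{-1..1}. poly (P i) z = (1 + t * xrho \<alpha> \<tau> \<pi> m m z) * poly (\<pi> i) z
                                         - t * xrho \<alpha> \<tau> \<pi> i m z * poly (\<pi> m) z) \<longrightarrow>
           xGegFamily \<alpha> \<tau>m P"
proof (intro allI impI)
  fix \<tau>m P
  assume tmA: "\<forall>z\<in>{-1..1}. poly \<tau>m z = poly \<tau> z * (1 + t * xrho \<alpha> \<tau> \<pi> m m z)"
    and PA: "\<forall>i. \<forall>z\<in>{-1..1}. poly (P i) z = (1 + t * xrho \<alpha> \<tau> \<pi> m m z) * poly (\<pi> i) z
                                         - t * xrho \<alpha> \<tau> \<pi> i m z * poly (\<pi> m) z"
  obtain n :: nat where n: "\<alpha> - 1/2 = real n" using half_int by (auto elim: Nats_cases)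
  have alpha: "\<alpha> = real n + 1/2" using n by simp
  have tnz: "\<forall>z\<in>{-1..1}. poly \<tau> z \<noteq> 0" and opfam: "xGegOperatorEigenfamily \<alpha> \<tau> \<pi>"
    and comp: "xComplete (xW \<alpha> \<tau>) \<pi>"
    using fam unfolding xGegFamily_def by auto
  interpret ctx \<alpha> \<tau> \<pi> lam n m t
    by unfold_locales (use alpha eig lam_distinct tnz pos in auto)
  interpret ctx2 \<alpha> \<tau> \<pi> lam n m t \<tau>m P
  proof unfold_locales
    fix z :: real assume z: "z \<in> {-1..1}"
    show "poly \<tau>m z = poly \<tau> z * h z" using tmA z xrho_rho[OF z] by (simp add: h_def)
    fix i
    show "poly (P i) z = h z * poly (\<pi> i) z - t * rho i m z * poly (\<pi> m) z"
      using PA z xrho_rho[OF z] by (simp add: h_def)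
  qed
  have cof: "finite (UNIV - range (\<lambda>i. degree (\<pi> i)))"
    using opfam unfolding xGegOperatorEigenfamily_def by auto
  show "xGegFamily \<alpha> \<tau>m P"
    unfolding xGegFamily_def xGegOperatorEigenfamily_def
    using tm_nz eig_new inj_degP cofin_P[OF cof] complete_new[OF comp] by blast
qed



end
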